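(* Let $g\in C^{\omega}(\mathbb{R})$ satisfy (G). Suppose $X_{\rm toy}\neq\emptyset$. If $\beta\in X_{\rm toy}$, then the toy tip solution $(\rho_\beta,r_\beta)$ is a toy steady tip growth solution.
   Context: Condition (G) on real-analytic $g:\mathbb{R}\to\mathbb{R}$: $g(v)>0$, $g'(v)\ge0$, $\frac{d^2}{dv^2}(v^2g(v^2))>0$ for all $v>0$, and $\lim_{v\to\infty}v g(v^2)=\infty$. Toy model: $\rho'=\frac32\frac{1-\rho^2}{r}\Big(-1+\frac{\sqrt{1-\rho^2}(\beta r^2g(r^2)+\rho)}{r}\Big)$, $r'=\rho$ (prime $=d/ds$) on $M_0=(-1,1)\times\mathbb{R}_{>0}$. For a solution on $(0,s_{\max})$: (S1) $\lim_{s\to0^+}\rho=1$, $\lim r=0$, $\lim\sqrt{1-\rho^2}/r=\eta_0>0$; (S2) there exist $s_0>0$ and real-analytic $G:(-a,a)\to\mathbb{R}_{>0}$, $a=r(s_0)^2$, with $\rho(s)=G(r(s)^2)$ on $(0,s_0)$; (S3) defined on $(0,\infty)$ with $\rho'<0,\rho>0$ for all $s>0$; (S4) $\lim_{s\to\infty}\rho=0$, $\lim_{s\to\infty} r=r_\infty>0$. A toy steady tip growth solution satisfies (S1)–(S4). A toy tip solution satisfies (S1), (S2) and $\rho'<0,\rho>0$ on some $(0,s_0)$, $s_0>0$. For each $\beta\ge0$ there is a unique maximal toy tip solution, denoted $(\rho_\beta,r_\beta)$. Sets: $A_{\rm toy}=\{\beta>0:\exists s_0>0,\ \rho_\beta(s)\rho_\beta'(s)<0\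 \forall s\in(0,s_0),\ \rho_\beta(s_0)=0\}$; $B_{\rm toy}=\{\beta>0:\exists s_0>0,\ \rho_\beta(s)\rho_\beta'(s)<0\ \forall s\in(0,s_0),\ \rho_\beta'(s_0)=0\}$; $X_{\rm toy}=\mathbb{R}_{>0}\setminus(A_{\rm toy}\cup B_{\rm toy})$. *)

theory Defs
  imports "HOL-Analysis.Analysis"
begin

definition real_analytic_on :: "real set \<Rightarrow> (real \<Rightarrow> real) \<Rightarrow> bool" where
  "real_analytic_on S f \<longleftrightarrow>
     (\<forall>x\<in>S. \<exists>c::nat \<Rightarrow> real. \<exists>\<delta>>0. ball x \<delta> \<subseteq> S \<and>
        (\<forall>y. \<bar>y - x\<bar> < \<delta> \<longrightarrow> (\<lambda>n. c n * (y - x) ^ n) sums f y))"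

definition condG :: "(real \<Rightarrow> real) \<Rightarrow> bool" where
  "condG g \<longleftrightarrow>
     (\<forall>v>0. g v > 0 \<and> deriv g v \<ge> 0 \<and> deriv (deriv (\<lambda>w. w^2 * g (w^2))) v > 0)
     \<and> filterlim (\<lambda>v. v * g (v^2)) at_top at_top"

definition toy_rhs :: "(real \<Rightarrow> real) \<Rightarrow> real \<Rightarrow> real \<Rightarrow> real \<Rightarrow> real" where
  "toy_rhs g \<beta> \<rho> r =
     3/2 * (1 - \<rho>^2) / r * (-1 + sqrt (1 - \<rho>^2) * (\<beta> * r^2 * g (r^2) + \<rho>) / r)"

definition sdom :: "ereal \<Rightarrow> real set" where
  "sdom smax = {s. 0 < s \<and> ereal s < smax}"

definition toy_solution :: "(real \<Rightarrow> real) \<Rightarrow> real \<Rightarrow> (real \<Rightarrow> real) \<Rightarrow> (real \<Rightarrow> real) \<Rightarrow> ereal \<Rightarrow> bool" where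
  "toy_solution g \<beta> \<rho> r smax \<longleftrightarrow> 0 < smax \<and>
     (\<forall>s\<in>sdom smax. -1 < \<rho> s \<and> \<rho> s < 1 \<and> 0 < r s \<and>
        (\<rho> has_real_derivative toy_rhs g \<beta> (\<rho> s) (r s)) (at s) \<and>
        (r has_real_derivative \<rho> s) (at s))"

definition toy_S1 :: "(real \<Rightarrow> real) \<Rightarrow> (real \<Rightarrow> real) \<Rightarrow> bool" where
  "toy_S1 \<rho> r \<longleftrightarrow> (\<rho> \<longlongrightarrow> 1) (at_right 0) \<and> (r \<longlongrightarrow> 0) (at_right 0) \<and>
     (\<exists>\<eta>0>0. ((\<lambda>s. sqrt (1 - (\<rho> s)^2) / r s) \<longlongrightarrow> \<eta>0) (at_right 0))"

definition toy_S2 :: "(real \<Rightarrow> real) \<Rightarrow> (real \<Rightarrow> real) \<Rightarrow> ereal \<Rightarrow> bool" where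
  "toy_S2 \<rho> r smax \<longleftrightarrow> (\<exists>s0. s0 \<in> sdom smax \<and>
     (\<exists>G. real_analytic_on {- ((r s0)^2) <..< (r s0)^2} G \<and>
          (\<forall>v\<in>{- ((r s0)^2) <..< (r s0)^2}. G v > 0) \<and>
          (\<forall>s\<in>{0<..<s0}. \<rho> s = G ((r s)^2))))"

definition toy_tip_solution :: "(real \<Rightarrow> real) \<Rightarrow> real \<Rightarrow> (real \<Rightarrow> real) \<Rightarrow> (real \<Rightarrow> real) \<Rightarrow> ereal \<Rightarrow> bool" where
  "toy_tip_solution g \<beta> \<rho> r smax \<longleftrightarrow> toy_solution g \<beta> \<rho> r smax \<and> toy_S1 \<rho> r \<and> toy_S2 \<rho> r smax \<and>
     (\<exists>s0>0. ereal s0 \<le> smax \<and> (\<forall>s\<in>{0<..<s0}. deriv \<rho> s < 0 \<and> \<rho> s > 0))"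

definition max_toy_tip_solution :: "(real \<Rightarrow> real) \<Rightarrow> real \<Rightarrow> (real \<Rightarrow> real) \<Rightarrow> (real \<Rightarrow> real) \<Rightarrow> ereal \<Rightarrow> bool" where
  "max_toy_tip_solution g \<beta> \<rho> r smax \<longleftrightarrow> toy_tip_solution g \<beta> \<rho> r smax \<and>
     (\<forall>\<rho>2 r2 smax2. toy_solution g \<beta> \<rho>2 r2 smax2 \<and> smax \<le> smax2 \<and>
        (\<forall>s\<in>sdom smax. \<rho>2 s = \<rho> s \<and> r2 s = r s) \<longrightarrow> smax2 = smax)"

definition toy_steady_tip_growth :: "(real \<Rightarrow> real) \<Rightarrow> real \<Rightarrow> (real \<Rightarrow> real) \<Rightarrow> (real \<Rightarrow> real) \<Rightarrow> ereal \<Rightarrow> bool" where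
  "toy_steady_tip_growth g \<beta> \<rho> r smax \<longleftrightarrow> toy_solution g \<beta> \<rho> r smax \<and> toy_S1 \<rho> r \<and> toy_S2 \<rho> r smax \<and>
     smax = \<infinity> \<and> (\<forall>s>0. deriv \<rho> s < 0 \<and> \<rho> s > 0) \<and>
     (\<rho> \<longlongrightarrow> 0) at_top \<and> (\<exists>rinf>0. (r \<longlongrightarrow> rinf) at_top)"

definition A_toy :: "(real \<Rightarrow> real) \<Rightarrow> real set" where
  "A_toy g = {\<beta>. \<beta> > 0 \<and> (\<exists>\<rho> r smax. max_toy_tip_solution g \<beta> \<rho> r smax \<and>
     (\<exists>s0\<in>sdom smax. (\<forall>s\<in>{0<..<s0}. \<rho> s * deriv \<rho> s < 0) \<and> \<rho> s0 = 0))}"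

definition B_toy :: "(real \<Rightarrow> real) \<Rightarrow> real set" where
  "B_toy g = {\<beta>. \<beta> > 0 \<and> (\<exists>\<rho> r smax. max_toy_tip_solution g \<beta> \<rho> r smax \<and>
     (\<exists>s0\<in>sdom smax. (\<forall>s\<in>{0<..<s0}. \<rho> s * deriv \<rho> s < 0) \<and> deriv \<rho> s0 = 0))}"

definition X_toy :: "(real \<Rightarrow> real) \<Rightarrow> real set" where
  "X_toy g = {\<beta>. \<beta> > 0} - (A_toy g \<union> B_toy g)"

end

theory Submission
  imports Defs
begin


lemma analytic_deriv:
  assumes "real_analytic_on UNIV g"
  shows "(g has_real_derivative deriv g x) (at x) \<and> isCont (deriv g) x"
proof -
  obtain c :: "nat \<Rightarrow> real" and \<delta> where d: "\<delta> > 0"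
    and sm: "\<And>y. \<bar>y - x\<bar> < \<delta> \<Longrightarrow> (\<lambda>n. c n * (y - x) ^ n) sums g y"
    using assms unfolding real_analytic_on_def by blast
  define P where "P u = (\<Sum>n. c n * u ^ n)" for u
  define D where "D u = (\<Sum>n. diffs c n * u ^ n)" for u
  have gP: "g y = P (y - x)" if "\<bar>y - x\<bar> < \<delta>" for y
    using sm[OF that] unfolding P_def by (simp add: sums_iff)
  have summ: "summable (\<lambda>n. c n * u ^ n)" if "\<bar>u\<bar> < \<delta>" for u
    using sm[of "x + u"] that by (simp add: sums_iff)
  have der: "(g has_real_derivative D (z - x)) (at z)" if z: "\<bar>z - x\<bar> < \<delta>" for z
  proof -
    define K where "K = (\<bar>z - x\<bar> + \<delta>) / 2"
    have K: "\<bar>K\<bar> < \<delta>" "\<bar>z - x\<bar> < \<bar>K\<bar>" using z d by (auto simp: K_def)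
    have "(P has_real_derivative D (z - x)) (at (z - x))"
      unfolding P_def D_def by (rule termdiffs_strong[OF summ[OF K(1)]]) (use K in simp)
    then have "((\<lambda>y. P (y - x)) has_real_derivative D (z - x)) (at z)"
    proof -
      have "((\<lambda>y. y - x) has_real_derivative 1) (at z)" by (auto intro!: derivative_eq_intros)
      from DERIV_chain2[OF \<open>(P has_real_derivative D (z - x)) (at (z - x))\<close> this] show ?thesis by simp
    qed
    then show ?thesis
      by (rule has_field_derivative_transform_within_open[of _ _ _ "ball x \<delta>"])
         (use z in \<open>auto simp: dist_real_def gP abs_minus_commute\<close>)
  qed
  have dg: "deriv g z = D (z - x)" if "\<bar>z - x\<bar> < \<delta>" for z
    using der[OF that] by (rule DERIV_imp_deriv)
  have cD: "isCont D 0"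
  proof -
    have "summable (\<lambda>n. diffs c n * (\<delta>/2) ^ n)"
      by (rule termdiff_converges[of _ \<delta>]) (use d summ in auto)
    then show ?thesis unfolding D_def by (rule isCont_powser) (use d in simp)
  qed
  have "isCont (\<lambda>z. D (z - x)) x"
    by (rule isCont_o2[where f="\<lambda>z. z - x" and g=D]) (use cD in \<open>auto intro!: continuous_intros\<close>)
  then have "isCont (deriv g) x"
  proof (rule isCont_cong[THEN iffD1, rotated])
    show "\<forall>\<^sub>F z in nhds x. D (z - x) = deriv g z"
      using eventually_nhds_metric[of _ x] d
      by (auto simp: dist_real_def intro!: exI[of _ \<delta>] dg[symmetric])
  qed
  moreover have "(g has_real_derivative deriv g x) (at x)" using der[of x] dg[of x] d by simp
  ultimately show ?thesis by simp
qed



lemma picard: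
  fixes F :: "'a::euclidean_space \<Rightarrow> 'a" and p0 :: 'a and t0 h R L M :: real
  assumes R: "R > 0" and h: "h > 0" and L: "L \<ge> 0" and M: "M \<ge> 0"
    and bnd: "\<And>x. x \<in> cball p0 R \<Longrightarrow> norm (F x) \<le> M"
    and lip: "\<And>x y. x \<in> cball p0 R \<Longrightarrow> y \<in> cball p0 R \<Longrightarrow> norm (F x - F y) \<le> L * norm (x - y)"
    and hM: "h * M \<le> R" and hL: "h * L < 1"
  shows "\<exists>y. y t0 = p0 \<and> (\<forall>t\<in>{t0..t0+h}. y t \<in> cball p0 R \<and>
            (y has_vector_derivative F (y t)) (at t within {t0..t0+h}))"
proof -
  define cl where "cl t = min (t0+h) (max t0 t)" for t
  have cl_in: "cl t \<in> {t0..t0+h}" for t using h by (auto simp: cl_def)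
  have cl_id: "t \<in> {t0..t0+h} \<Longrightarrow> cl t = t" for t by (auto simp: cl_def)
  have cl_cont: "continuous_on UNIV cl" unfolding cl_def by (intro continuous_intros)
  have Fcont: "continuous_on (cball p0 R) F"
    unfolding continuous_on_iff
  proof (intro ballI allI impI)
    fix x e assume x: "x \<in> cball p0 R" and e: "(0::real) < e"
    show "\<exists>d>0. \<forall>x'\<in>cball p0 R. dist x' x < d \<longrightarrow> dist (F x') (F x) < e"
    proof (intro exI[of _ "e/(L+1)"] conjI ballI impI)
      show "e/(L+1) > 0" using e L by auto
      fix x' assume x': "x' \<in> cball p0 R" and d: "dist x' x < e/(L+1)"
      have "dist (F x') (F x) \<le> L * dist x' x" using lip[OF x' x] by (simp add: dist_norm)
      also have "\<dots> \<le> (L+1) * dist x' x" using L by (simp add: mult_right_mono)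
      also have "\<dots> < (L+1) * (e/(L+1))" using d L by (intro mult_strict_left_mono) auto
      also have "\<dots> = e" using L by simp
      finally show "dist (F x') (F x) < e" .
    qed
  qed
  define S where "S = {f :: real \<Rightarrow>\<^sub>C 'a. \<forall>t. apply_bcontfun f t \<in> cball p0 R}"
  define \<Phi>0 where "\<Phi>0 f t = p0 + integral {t0..cl t} (\<lambda>s. F (apply_bcontfun f s))" for f t
  have Gcont: "continuous_on A (\<lambda>s. F (apply_bcontfun f s))" if "f \<in> S" for f A
    by (rule continuous_on_compose2[OF Fcont]) (use that in \<open>auto simp: S_def\<close>)
  have Gint: "(\<lambda>s. F (apply_bcontfun f s)) integrable_on {a..b}" if "f \<in> S" for f a b
    by (rule integrable_continuous_interval[OF Gcont[OF that]])
  have ibound: "norm (integral {t0..u} (\<lambda>s. F (apply_bcontfun f s))) \<le> M * (u - t0)"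
    if "f \<in> S" "u \<in> {t0..t0+h}" for f u
  proof -
    have "norm (integral {t0..u} (\<lambda>s. F (apply_bcontfun f s))) \<le> M * Henstock_Kurzweil_Integration.content {t0..u}"
      by (rule has_integral_bound_real[OF M finite.emptyI integrable_integral[OF Gint[OF that(1)]]])
         (use that in \<open>auto simp: S_def intro!: bnd\<close>)
    then show ?thesis using that by simp
  qed
  have bc: "\<Phi>0 f \<in> bcontfun" if f: "f \<in> S" for f
  proof -
    have c1: "continuous_on {t0..t0+h} (\<lambda>u. integral {t0..u} (\<lambda>s. F (apply_bcontfun f s)))"
      by (rule indefinite_integral_continuous_1[OF Gint[OF f]])
    have "continuous_on UNIV (\<lambda>t. integral {t0..cl t} (\<lambda>s. F (apply_bcontfun f s)))"
      by (rule continuous_on_compose2[OF c1 cl_cont]) (use cl_in in auto)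
    then have cont: "continuous_on UNIV (\<Phi>0 f)" unfolding \<Phi>0_def by (intro continuous_intros)
    have "norm (\<Phi>0 f t) \<le> norm p0 + M * h" for t
    proof -
      have "norm (\<Phi>0 f t) \<le> norm p0 + norm (integral {t0..cl t} (\<lambda>s. F (apply_bcontfun f s)))"
        unfolding \<Phi>0_def by (rule norm_triangle_ineq)
      also have "\<dots> \<le> norm p0 + M * (cl t - t0)" using ibound[OF f cl_in] by simp
      also have "\<dots> \<le> norm p0 + M * h" using cl_in[of t] M by (auto intro!: mult_left_mono)
      finally show ?thesis .
    qed
    then have "bounded (range (\<Phi>0 f))" by (auto simp: bounded_iff)
    with cont show ?thesis by (simp add: bcontfun_def)
  qed
  define \<Phi> where "\<Phi> f = Bcontfun (\<Phi>0 f)" for f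
  have \<Phi>_app: "apply_bcontfun (\<Phi> f) = \<Phi>0 f" if "f \<in> S" for f
    unfolding \<Phi>_def using bc[OF that] by (simp add: Bcontfun_inverse)
  have \<Phi>S: "\<Phi> ` S \<subseteq> S"
  proof
    fix g assume "g \<in> \<Phi> ` S"
    then obtain f where f: "f \<in> S" and g: "g = \<Phi> f" by auto
    have "dist p0 (\<Phi>0 f t) \<le> R" for t
    proof -
      have "dist p0 (\<Phi>0 f t) = norm (integral {t0..cl t} (\<lambda>s. F (apply_bcontfun f s)))"
        unfolding \<Phi>0_def dist_norm by (simp add: norm_minus_commute)
      also have "\<dots> \<le> M * (cl t - t0)" using ibound[OF f cl_in] .
      also have "\<dots> \<le> M * h" using cl_in[of t] M by (auto intro!: mult_left_mono)
      also have "\<dots> \<le> R" using hM by (simp add: mult.commute)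
      finally show ?thesis .
    qed
    then show "g \<in> S" unfolding g S_def using \<Phi>_app[OF f] by simp
  qed
  have contr: "dist (\<Phi> f) (\<Phi> g) \<le> (h*L) * dist f g" if f: "f \<in> S" and g: "g \<in> S" for f g
  proof (rule dist_bound)
    fix t
    have ii: "integral {t0..cl t} (\<lambda>s. F (apply_bcontfun f s)) - integral {t0..cl t} (\<lambda>s. F (apply_bcontfun g s))
        = integral {t0..cl t} (\<lambda>s. F (apply_bcontfun f s) - F (apply_bcontfun g s))"
      by (rule integral_diff[symmetric]) (auto intro!: Gint f g)
    have "norm (integral {t0..cl t} (\<lambda>s. F (apply_bcontfun f s) - F (apply_bcontfun g s)))
        \<le> (L * dist f g) * Henstock_Kurzweil_Integration.content {t0..cl t}"
    proof (rule has_integral_bound_real[OF _ finite.emptyI])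
      show "0 \<le> L * dist f g" using L by simp
      show "((\<lambda>s. F (apply_bcontfun f s) - F (apply_bcontfun g s)) has_integral
          integral {t0..cl t} (\<lambda>s. F (apply_bcontfun f s) - F (apply_bcontfun g s))) {t0..cl t}"
        by (intro integrable_integral integrable_diff Gint f g)
      fix s
      have "norm (F (apply_bcontfun f s) - F (apply_bcontfun g s)) \<le> L * norm (apply_bcontfun f s - apply_bcontfun g s)"
        using f g by (intro lip) (auto simp: S_def)
      also have "\<dots> \<le> L * dist f g" using dist_bounded[of f s g] L
        by (intro mult_left_mono) (auto simp: dist_norm)
      finally show "norm (F (apply_bcontfun f s) - F (apply_bcontfun g s)) \<le> L * dist f g" .
    qed
    also have "\<dots> \<le> (L * dist f g) * h" using cl_in[of t] L
      by (intro mult_left_mono) auto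
    finally show "dist (apply_bcontfun (\<Phi> f) t) (apply_bcontfun (\<Phi> g) t) \<le> (h*L) * dist f g"
      using ii unfolding \<Phi>_app[OF f] \<Phi>_app[OF g] \<Phi>0_def dist_norm
      by (simp add: algebra_simps)
  qed
  have "closed S"
  proof -
    have "S = (\<Inter>t. (\<lambda>f::real \<Rightarrow>\<^sub>C 'a. apply_bcontfun f t) -` cball p0 R)" by (auto simp: S_def)
    moreover have "closed ((\<lambda>f::real \<Rightarrow>\<^sub>C 'a. apply_bcontfun f t) -` cball p0 R)" for t
    proof (rule closed_vimage[OF closed_cball])
      have "1-lipschitz_on UNIV (\<lambda>f::real \<Rightarrow>\<^sub>C 'a. apply_bcontfun f t)"
        by (rule lipschitz_onI) (auto simp: dist_bounded)
      then show "continuous_on UNIV (\<lambda>f::real \<Rightarrow>\<^sub>C 'a. apply_bcontfun f t)"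
        by (rule lipschitz_on_continuous_on)
    qed
    ultimately show ?thesis by auto
  qed
  then have "complete S" by (simp add: complete_eq_closed)
  moreover have "const_bcontfun p0 \<in> S" using R by (auto simp: S_def const_bcontfun.rep_eq)
  ultimately obtain x where x: "x \<in> S" "\<Phi> x = x"
    using Banach_fix[of S "h*L" \<Phi>] h L hL \<Phi>S contr by (auto intro: mult_nonneg_nonneg)
  define y where "y = apply_bcontfun x"
  have yeq: "y t = p0 + integral {t0..cl t} (\<lambda>s. F (y s))" for t
    using \<Phi>_app[OF x(1)] x(2) unfolding y_def \<Phi>0_def by metis
  show ?thesis
  proof (intro exI[of _ y] conjI ballI)
    show "y t0 = p0" using yeq[of t0] h by (simp add: cl_def)
    fix t assume t: "t \<in> {t0..t0+h}"
    show "y t \<in> cball p0 R" using x(1) by (simp add: S_def y_def)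
    have cG: "continuous_on {t0..t0+h} (\<lambda>s. F (y s))" unfolding y_def by (rule Gcont[OF x(1)])
    have dd: "((\<lambda>u. p0 + integral {t0..u} (\<lambda>s. F (y s))) has_vector_derivative F (y t)) (at t within {t0..t0+h})"
      using has_vector_derivative_add[OF has_vector_derivative_const integral_has_vector_derivative[OF cG t]] by simp
    have ee: "\<And>u. u \<in> {t0..t0+h} \<Longrightarrow> y u = p0 + integral {t0..u} (\<lambda>s. F (y s))"
    proof -
      fix u assume u: "u \<in> {t0..t0+h}"
      show "y u = p0 + integral {t0..u} (\<lambda>s. F (y s))" using yeq[of u] cl_id[OF u] by simp
    qed
    show "(y has_vector_derivative F (y t)) (at t within {t0..t0+h})"
      by (rule has_vector_derivative_transform[OF t ee dd])
  qed
qed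



definition lipf :: "'a::metric_space set \<Rightarrow> ('a \<Rightarrow> real) \<Rightarrow> bool" where
  "lipf U f \<longleftrightarrow> (\<exists>L. L-lipschitz_on U f)"

lemma lip_bounded:
  assumes "lipf U f" "compact U"
  shows "\<exists>B\<ge>0. \<forall>x\<in>U. \<bar>f x\<bar> \<le> B"
proof -
  obtain L where "L-lipschitz_on U f" using assms(1) by (auto simp: lipf_def)
  then have "continuous_on U f" by (rule lipschitz_on_continuous_on)
  then have "compact (f ` U)" using assms(2) by (rule compact_continuous_image)
  then obtain B where "B > 0" "\<forall>y\<in>f ` U. norm y \<le> B" using compact_imp_bounded bounded_pos by metis
  then show ?thesis by (intro exI[of _ B]) auto
qed

lemma lip_mult:
  assumes U: "compact U" and f: "lipf U f" and g: "lipf U g"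
  shows "lipf U (\<lambda>x. f x * g x)"
proof -
  obtain Lf where Lf: "Lf-lipschitz_on U f" using f by (auto simp: lipf_def)
  obtain Lg where Lg: "Lg-lipschitz_on U g" using g by (auto simp: lipf_def)
  obtain A where A: "A \<ge> 0" "\<forall>x\<in>U. \<bar>f x\<bar> \<le> A" using lip_bounded[OF f U] by auto
  obtain B where B: "B \<ge> 0" "\<forall>x\<in>U. \<bar>g x\<bar> \<le> B" using lip_bounded[OF g U] by auto
  have "(A * Lg + B * Lf)-lipschitz_on U (\<lambda>x. f x * g x)"
  proof (rule lipschitz_onI)
    fix x y assume x: "x \<in> U" and y: "y \<in> U"
    have e: "f x * g x - f y * g y = f x * (g x - g y) + g y * (f x - f y)" by (simp add: algebra_simps)
    have "\<bar>f x * (g x - g y)\<bar> \<le> A * (Lg * dist x y)"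
      unfolding abs_mult using A x lipschitz_onD[OF Lg x y] lipschitz_on_nonneg[OF Lg]
      by (intro mult_mono) (auto simp: dist_real_def)
    moreover have "\<bar>g y * (f x - f y)\<bar> \<le> B * (Lf * dist x y)"
      unfolding abs_mult using B y lipschitz_onD[OF Lf x y] lipschitz_on_nonneg[OF Lf]
      by (intro mult_mono) (auto simp: dist_real_def)
    ultimately show "dist (f x * g x) (f y * g y) \<le> (A * Lg + B * Lf) * dist x y"
      unfolding dist_real_def e by (simp add: algebra_simps)
  qed (use A B lipschitz_on_nonneg[OF Lf] lipschitz_on_nonneg[OF Lg] in simp)
  then show ?thesis by (auto simp: lipf_def)
qed

lemma lip_add: "lipf U f \<Longrightarrow> lipf U g \<Longrightarrow> lipf U (\<lambda>x. f x + g x)"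
  unfolding lipf_def by (auto intro: lipschitz_on_add)

lemma lip_diff: "lipf U f \<Longrightarrow> lipf U g \<Longrightarrow> lipf U (\<lambda>x. f x - g x)"
  unfolding lipf_def by (auto intro: lipschitz_on_diff)

lemma lip_const: "lipf U (\<lambda>x. c)"
  unfolding lipf_def by (auto intro: lipschitz_on_constant)

lemma lip_fst: "lipf U (\<lambda>x::real\<times>real. fst x)"
  unfolding lipf_def by (rule exI[of _ 1], rule lipschitz_onI) (simp_all add: dist_fst_le)

lemma lip_snd: "lipf U (\<lambda>x::real\<times>real. snd x)"
  unfolding lipf_def by (rule exI[of _ 1], rule lipschitz_onI) (simp_all add: dist_snd_le)

lemma lip_comp:
  assumes "lipf U f" "lipf V h" "f ` U \<subseteq> V"
  shows "lipf U (\<lambda>x. h (f x))"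
proof -
  obtain C where C: "C-lipschitz_on U f" using assms(1) by (auto simp: lipf_def)
  obtain D where D: "D-lipschitz_on V h" using assms(2) by (auto simp: lipf_def)
  have "D-lipschitz_on (f ` U) h" using D assms(3) by (rule lipschitz_on_subset)
  then show ?thesis using lipschitz_on_compose2[OF C] by (auto simp: lipf_def)
qed

lemma lip_inverse:
  assumes m: "m > 0"
  shows "lipf {m..} (\<lambda>u::real. inverse u)"
proof -
  have "(1/m^2)-lipschitz_on {m..} (\<lambda>u::real. inverse u)"
  proof (rule lipschitz_onI)
    fix x y :: real assume x: "x \<in> {m..}" and y: "y \<in> {m..}"
    have xy: "x \<ge> m" "y \<ge> m" using x y by auto
    have "dist (inverse x) (inverse y) = \<bar>y - x\<bar> / (x*y)"
      using xy m by (simp add: dist_real_def field_simps abs_div)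
    also have "\<dots> \<le> \<bar>y - x\<bar> / m^2"
      using xy m by (intro divide_left_mono) (auto simp: power2_eq_square intro: mult_mono)
    also have "\<dots> = 1/m^2 * dist x y" by (simp add: dist_real_def abs_minus_commute)
    finally show "dist (inverse x) (inverse y) \<le> 1/m^2 * dist x y" .
  qed simp
  then show ?thesis by (auto simp: lipf_def)
qed

lemma lip_sqrt:
  assumes m: "m > 0"
  shows "lipf {m..} (\<lambda>u::real. sqrt u)"
proof -
  have "(1/sqrt m)-lipschitz_on {m..} (\<lambda>u::real. sqrt u)"
  proof (rule lipschitz_onI)
    fix x y :: real assume x: "x \<in> {m..}" and y: "y \<in> {m..}"
    have xy: "x \<ge> m" "y \<ge> m" using x y by auto
    have sx: "sqrt x \<ge> sqrt m" "sqrt y \<ge> sqrt m" using xy by auto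
    have pos: "sqrt m > 0" using m by simp
    have "(sqrt x - sqrt y) * (sqrt x + sqrt y) = x - y" using xy m
      by (simp add: algebra_simps)
    then have "\<bar>sqrt x - sqrt y\<bar> * (sqrt x + sqrt y) = \<bar>x - y\<bar>"
      using sx pos by (metis abs_mult abs_of_pos add_pos_pos less_le_trans)
    moreover have "\<bar>sqrt x - sqrt y\<bar> * sqrt m \<le> \<bar>sqrt x - sqrt y\<bar> * (sqrt x + sqrt y)"
      using sx pos by (intro mult_left_mono) linarith+
    ultimately have "\<bar>sqrt x - sqrt y\<bar> * sqrt m \<le> \<bar>x - y\<bar>" by simp
    then show "dist (sqrt x) (sqrt y) \<le> 1/sqrt m * dist x y"
      using pos by (simp add: dist_real_def field_simps)
  qed (use m in simp)
  then show ?thesis by (auto simp: lipf_def)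
qed

lemma lip_deriv_cont:
  assumes der: "\<And>x. (g has_real_derivative deriv g x) (at x)" and cont: "\<And>x. isCont (deriv g) x"
  shows "lipf {a..b} g"
proof -
  have "continuous_on {a..b} (deriv g)" using cont by (simp add: continuous_at_imp_continuous_on)
  then have "compact (deriv g ` {a..b})" by (rule compact_continuous_image) simp
  then obtain B where B: "B > 0" "\<forall>y\<in>deriv g ` {a..b}. norm y \<le> B"
    using compact_imp_bounded bounded_pos by metis
  have "B-lipschitz_on {a..b} g"
  proof (rule lipschitz_onI)
    have *: "\<bar>g v - g u\<bar> \<le> B * \<bar>v - u\<bar>" if "u \<in> {a..b}" "v \<in> {a..b}" "u < v" for u v
    proof -
      obtain z where z: "u < z" "z < v" "g v - g u = (v - u) * deriv g z"
        using MVT2[OF \<open>u < v\<close>, of g "deriv g"] der by blast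
      have "\<bar>deriv g z\<bar> \<le> B" using B that z by auto
      then show ?thesis using z \<open>u<v\<close> by (simp add: abs_mult mult.commute mult_right_mono)
    qed
    fix x y assume "x \<in> {a..b}" "y \<in> {a..b}"
    then show "dist (g x) (g y) \<le> B * dist x y"
      using *[of x y] *[of y x] B by (cases x y rule: linorder_cases) (auto simp: dist_real_def abs_minus_commute)
  qed (use B in simp)
  then show ?thesis by (auto simp: lipf_def)
qed



lemma F_pair_lip:
  fixes Mx c1 m \<beta> :: real and g :: "real \<Rightarrow> real"
  assumes ga: "real_analytic_on UNIV g" and c1: "0 \<le> c1" "c1 < 1" and m: "0 < m"
  defines "Q \<equiv> {-c1..c1} \<times> {m..Mx}"
  shows "\<exists>L M. L \<ge> 0 \<and> M \<ge> 0 \<and>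
    (\<forall>x\<in>Q. norm ((toy_rhs g \<beta> (fst x) (snd x), fst x)) \<le> M) \<and>
    (\<forall>x\<in>Q. \<forall>y\<in>Q. norm ((toy_rhs g \<beta> (fst x) (snd x), fst x) - (toy_rhs g \<beta> (fst y) (snd y), fst y)) \<le> L * norm (x - y))"
proof -
  have cQ: "compact Q" unfolding Q_def by (intro compact_Times compact_Icc)
  have der: "\<And>x. (g has_real_derivative deriv g x) (at x)" and cont: "\<And>x. isCont (deriv g) x"
    using analytic_deriv[OF ga] by auto
  have i: "lipf Q (\<lambda>x. inverse (snd x))"
    by (rule lip_comp[OF lip_snd lip_inverse[OF m]]) (auto simp: Q_def)
  have sq: "lipf Q (\<lambda>x. 1 - fst x * fst x)"
    by (intro lip_diff lip_const lip_mult[OF cQ] lip_fst)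
  have c1sq: "0 < 1 - c1 * c1" using c1 mult_strict_mono[of c1 1 c1 1] by simp
  have s: "lipf Q (\<lambda>x. sqrt (1 - fst x * fst x))"
  proof (rule lip_comp[OF sq lip_sqrt[OF c1sq]])
    show "(\<lambda>x. 1 - fst x * fst x) ` Q \<subseteq> {1 - c1 * c1..}"
    proof
      fix z assume "z \<in> (\<lambda>x. 1 - fst x * fst x) ` Q"
      then obtain x where x: "x \<in> Q" "z = 1 - fst x * fst x" by auto
      have "\<bar>fst x\<bar> \<le> c1" using x(1) by (auto simp: Q_def)
      from mult_mono[OF this this c1(1) abs_ge_zero] have "fst x * fst x \<le> c1 * c1" by (simp add: abs_mult_self_eq)
      then show "z \<in> {1 - c1 * c1..}" using x by simp
    qed
  qed
  have w: "lipf Q (\<lambda>x. g (snd x * snd x))"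
  proof (rule lip_comp[OF _ lip_deriv_cont[OF der cont, of "m*m" "Mx*Mx"]])
    show "lipf Q (\<lambda>x. snd x * snd x)" by (intro lip_mult[OF cQ] lip_snd)
    show "(\<lambda>x. snd x * snd x) ` Q \<subseteq> {m * m..Mx * Mx}"
      using m by (auto simp: Q_def intro!: mult_mono)
  qed
  have F: "lipf Q (\<lambda>x. toy_rhs g \<beta> (fst x) (snd x))"
    unfolding toy_rhs_def divide_inverse power2_eq_square
    by (intro lip_mult[OF cQ] lip_add lip_diff lip_const lip_fst lip_snd i s w)
  obtain L1 where L1: "L1-lipschitz_on Q (\<lambda>x. toy_rhs g \<beta> (fst x) (snd x))" using F by (auto simp: lipf_def)
  have "1-lipschitz_on Q (\<lambda>x::real\<times>real. fst x)"
    by (rule lipschitz_onI) (simp_all add: dist_fst_le)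
  from lipschitz_on_Pair[OF L1 this]
  have LP: "(sqrt (L1\<^sup>2 + 1\<^sup>2))-lipschitz_on Q (\<lambda>x. (toy_rhs g \<beta> (fst x) (snd x), fst x))" .
  have "continuous_on Q (\<lambda>x. (toy_rhs g \<beta> (fst x) (snd x), fst x))"
    using LP by (rule lipschitz_on_continuous_on)
  then have "compact ((\<lambda>x. (toy_rhs g \<beta> (fst x) (snd x), fst x)) ` Q)"
    using cQ by (rule compact_continuous_image)
  then obtain M where M: "M > 0" "\<forall>y\<in>(\<lambda>x. (toy_rhs g \<beta> (fst x) (snd x), fst x)) ` Q. norm y \<le> M"
    using compact_imp_bounded bounded_pos by metis
  show ?thesis
  proof (rule exI[of _ "sqrt (L1\<^sup>2 + 1\<^sup>2)"], rule exI[of _ M], intro conjI ballI)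
    show "0 \<le> sqrt (L1\<^sup>2 + 1\<^sup>2)" by simp
    show "0 \<le> M" using M by simp
    fix x assume x: "x \<in> Q"
    show "norm ((toy_rhs g \<beta> (fst x) (snd x), fst x)) \<le> M" using M x by auto
    fix y assume y: "y \<in> Q"
    show "norm ((toy_rhs g \<beta> (fst x) (snd x), fst x) - (toy_rhs g \<beta> (fst y) (snd y), fst y)) \<le> sqrt (L1\<^sup>2 + 1\<^sup>2) * norm (x - y)"
      using lipschitz_onD[OF LP x y] by (simp add: dist_norm)
  qed
qed



lemma glue_deriv:
  fixes f G :: "real \<Rightarrow> real"
  assumes aT: "a < T" and Tb: "T < b" and cf: "continuous_on {a..T} f" and cG: "continuous_on {a..T} G"
    and d: "\<And>u. u \<in> {a<..<T} \<Longrightarrow> (f has_real_derivative G u) (at u)"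
    and r: "(f has_real_derivative G T) (at T within {T..b})"
  shows "(f has_real_derivative G T) (at T)"
proof -
  have I: "f t = f a + integral {a..t} G" if t: "t \<in> {a..T}" for t
  proof -
    have "(G has_integral (f t - f a)) {a..t}"
    proof (rule fundamental_theorem_of_calculus_interior)
      show "a \<le> t" using t by simp
      show "continuous_on {a..t} f" using cf by (rule continuous_on_subset) (use t in auto)
      fix u assume "u \<in> {a<..<t}"
      then have "u \<in> {a<..<T}" using t by auto
      show "(f has_vector_derivative G u) (at u)"
        using d[OF \<open>u \<in> {a<..<T}\<close>] unfolding has_real_derivative_iff_has_vector_derivative .
    qed
    from integral_unique[OF this] show ?thesis by linarith
  qed
  have Tin: "T \<in> {a..T}" using aT by simp
  have "((\<lambda>t. f a + integral {a..t} G) has_vector_derivative 0 + G T) (at T within {a..T})"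
    by (rule has_vector_derivative_add[OF has_vector_derivative_const integral_has_vector_derivative[OF cG Tin]])
  then have dd: "((\<lambda>t. f a + integral {a..t} G) has_vector_derivative G T) (at T within {a..T})"
    by simp
  have "(f has_vector_derivative G T) (at T within {a..T})"
    by (rule has_vector_derivative_transform[OF Tin I dd])
  then have L: "(f has_real_derivative G T) (at T within {a..T})"
    unfolding has_real_derivative_iff_has_vector_derivative .
  have "((\<lambda>y. (f y - f T) / (y - T)) \<longlongrightarrow> G T) (at T within ({a..T} \<union> {T..b}))"
    using L r unfolding has_field_derivative_iff Lim_within_Un by simp
  moreover have "{a..T} \<union> {T..b} = {a..b}" using aT Tb by auto
  moreover have "at T within {a..b} = at T" using aT Tb by (intro at_within_Icc_at) auto
  ultimately show ?thesis unfolding has_field_derivative_iff by simp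
qed



lemma sdom_ereal: "sdom (ereal T) = {0<..<T}" by (auto simp: sdom_def)
lemma sdom_inf: "sdom \<infinity> = {0<..}" by (auto simp: sdom_def)

lemma toy_rhs_isCont:
  assumes gc: "\<And>x. isCont g x" and r: "r s \<noteq> 0" and cr: "isCont r s" and cq: "isCont q s"
  shows "isCont (\<lambda>s. toy_rhs g \<beta> (q s) (r s)) s"
proof -
  have "isCont (\<lambda>s. g (r s ^ 2)) s"
    by (rule isCont_o2[where f="\<lambda>s. r s ^ 2" and g=g]) (use cr gc in \<open>auto intro!: continuous_intros\<close>)
  then show ?thesis unfolding toy_rhs_def using r cr cq by (intro continuous_intros) auto
qed

lemma stepA:
  assumes sol: "toy_solution g \<beta> \<rho> r smax"
    and gc: "\<And>x. isCont g x"
    and s0: "s0 > 0" "ereal s0 \<le> smax" "\<forall>s\<in>{0<..<s0}. deriv \<rho> s < 0 \<and> \<rho> s > 0"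
    and notA: "\<not> (\<exists>s1\<in>sdom smax. (\<forall>s\<in>{0<..<s1}. \<rho> s * deriv \<rho> s < 0) \<and> \<rho> s1 = 0)"
    and notB: "\<not> (\<exists>s1\<in>sdom smax. (\<forall>s\<in>{0<..<s1}. \<rho> s * deriv \<rho> s < 0) \<and> deriv \<rho> s1 = 0)"
  shows "\<forall>s\<in>sdom smax. deriv \<rho> s < 0 \<and> \<rho> s > 0"
proof (rule ccontr)
  define Fh where "Fh s = toy_rhs g \<beta> (\<rho> s) (r s)" for s
  have sD: "\<And>s. s \<in> sdom smax \<Longrightarrow> -1 < \<rho> s \<and> \<rho> s < 1 \<and> 0 < r s \<and>
        (\<rho> has_real_derivative Fh s) (at s) \<and> (r has_real_derivative \<rho> s) (at s)"
    using sol unfolding toy_solution_def Fh_def by blast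
  have dF: "deriv \<rho> s = Fh s" if "s \<in> sdom smax" for s using sD[OF that] DERIV_imp_deriv by blast
  have cF: "isCont Fh s" if "s \<in> sdom smax" for s
    unfolding Fh_def using sD[OF that]
    by (intro toy_rhs_isCont gc) (auto intro: DERIV_isCont)
  have c\<rho>: "isCont \<rho> s" if "s \<in> sdom smax" for s using sD[OF that] by (auto intro: DERIV_isCont)
  define good where "good s \<longleftrightarrow> deriv \<rho> s < 0 \<and> \<rho> s > 0" for s
  assume "\<not> (\<forall>s\<in>sdom smax. deriv \<rho> s < 0 \<and> \<rho> s > 0)"
  then obtain s1 where s1: "s1 \<in> sdom smax" "\<not> good s1" by (auto simp: good_def)
  define Bad where "Bad = {s\<in>sdom smax. \<not> good s}"
  define ss where "ss = Inf Bad"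
  have Bne: "Bad \<noteq> {}" using s1 by (auto simp: Bad_def)
  have Bbdd: "bdd_below Bad" by (rule bdd_belowI[of _ 0]) (auto simp: Bad_def sdom_def)
  have lb: "s0 \<le> s" if "s \<in> Bad" for s
  proof (rule ccontr)
    assume "\<not> s0 \<le> s"
    then have "s \<in> {0<..<s0}" using that by (auto simp: Bad_def sdom_def)
    then show False using s0(3) that by (auto simp: Bad_def good_def)
  qed
  have ss0: "s0 \<le> ss" unfolding ss_def by (rule cInf_greatest[OF Bne]) (use lb in auto)
  have ss1: "ss \<le> s1" unfolding ss_def by (rule cInf_lower) (use s1 Bbdd in \<open>auto simp: Bad_def\<close>)
  have ssD: "ss \<in> sdom smax" using s1 ss0 ss1 s0(1) by (auto simp: sdom_def intro: le_less_trans[of "ereal ss" "ereal s1"])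
  have below: "good u" if u: "u \<in> {0<..<ss}" for u
  proof (rule ccontr)
    assume ng: "\<not> good u"
    have "u \<in> sdom smax" using u ssD by (auto simp: sdom_def intro: less_trans[of "ereal u" "ereal ss"])
    then have "u \<in> Bad" using ng by (auto simp: Bad_def)
    then have "ss \<le> u" unfolding ss_def using Bbdd by (rule cInf_lower)
    then show False using u by simp
  qed
  have ssp: "0 < ss" using s0(1) ss0 by simp
  have ev: "eventually (\<lambda>u. u \<in> {0<..<ss}) (at_left ss)" using ssp by (rule eventually_at_left_real)
  have nb: "at_left ss \<noteq> (bot :: real filter)" by simp
  have "(\<rho> \<longlongrightarrow> \<rho> ss) (at_left ss)"
    using c\<rho>[OF ssD] by (simp add: isCont_def filterlim_at_split)
  moreover have "eventually (\<lambda>u. 0 \<le> \<rho> u) (at_left ss)"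
    using ev by eventually_elim (use below in \<open>force simp: good_def\<close>)
  ultimately have r0: "0 \<le> \<rho> ss" using nb by (intro tendsto_lowerbound)
  have "(Fh \<longlongrightarrow> Fh ss) (at_left ss)"
    using cF[OF ssD] by (simp add: isCont_def filterlim_at_split)
  moreover have "eventually (\<lambda>u. Fh u \<le> 0) (at_left ss)"
  proof (use ev in eventually_elim)
    case (elim u)
    then have "u \<in> sdom smax" using ssD by (auto simp: sdom_def intro: less_trans[of "ereal u" "ereal ss"])
    then show ?case using below[OF elim] dF by (auto simp: good_def)
  qed
  ultimately have F0: "Fh ss \<le> 0" using nb by (intro tendsto_upperbound)
  have prod: "\<forall>s\<in>{0<..<ss}. \<rho> s * deriv \<rho> s < 0"
    using below by (auto simp: good_def mult_pos_neg)
  have "\<rho> ss \<noteq> 0" using notA ssD prod by blast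
  then have rpos: "\<rho> ss > 0" using r0 by simp
  have "Fh ss \<noteq> 0" using notB ssD prod dF[OF ssD] by auto
  then have Fneg: "Fh ss < 0" using F0 by simp
  have "eventually (\<lambda>u. \<rho> u > 0) (at ss)"
    using c\<rho>[OF ssD] rpos by (auto simp: isCont_def intro: order_tendstoD)
  moreover have "eventually (\<lambda>u. Fh u < 0) (at ss)"
    using cF[OF ssD] Fneg by (auto simp: isCont_def intro: order_tendstoD)
  ultimately have "eventually (\<lambda>u. \<rho> u > 0 \<and> Fh u < 0) (at ss)" by (rule eventually_conj)
  then obtain d where d: "d > 0" "\<And>u. u \<noteq> ss \<Longrightarrow> dist u ss < d \<Longrightarrow> \<rho> u > 0 \<and> Fh u < 0"
    unfolding eventually_at by blast
  have "ss + d \<le> ss" unfolding ss_def[symmetric]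
  proof -
    have "ss + d \<le> Inf Bad"
    proof (rule cInf_greatest[OF Bne])
      fix s assume sB: "s \<in> Bad"
      have "ss \<le> s" unfolding ss_def using sB Bbdd by (rule cInf_lower)
      moreover have "s \<noteq> ss" using sB rpos Fneg dF[OF ssD] by (auto simp: Bad_def good_def)
      moreover have "\<not> (s < ss + d)"
      proof
        assume "s < ss + d"
        with \<open>ss \<le> s\<close> \<open>s \<noteq> ss\<close> have "\<rho> s > 0 \<and> Fh s < 0" by (intro d(2)) (auto simp: dist_real_def)
        then show False using sB dF by (auto simp: Bad_def good_def)
      qed
      ultimately show "ss + d \<le> s" by simp
    qed
    then show ?thesis by (simp add: ss_def)
  qed
  then show False using d(1) by simp
qed



lemma rhs_pos:
  fixes q x aa \<beta> :: real
  assumes q: "0 < q" "q \<le> aa" and aa: "aa < 1" and x: "0 < x" and G: "0 < g (x^2)" and \<beta>: "\<beta> > 0"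
    and big: "2 / (\<beta> * sqrt (1 - aa^2)) \<le> x * g (x^2)"
  shows "toy_rhs g \<beta> q x > 0"
proof -
  define c where "c = sqrt (1 - aa^2)"
  define G where "G = g (x^2)"
  have aap: "0 < aa" using q by simp
  have "aa^2 < 1" using aa aap by (simp add: power_less_one_iff abs_less_iff power2_less_eq_zero_iff) 
  then have cp: "c > 0" by (simp add: c_def)
  have "q^2 \<le> aa^2" using q by (intro power_mono) auto
  then have sc: "c \<le> sqrt (1 - q^2)" unfolding c_def by simp
  have q1: "q^2 < 1" using \<open>q^2 \<le> aa^2\<close> \<open>aa^2 < 1\<close> by simp
  have "2 \<le> \<beta> * c * (x * G)"
    using big cp \<beta> unfolding c_def[symmetric] G_def[symmetric] by (simp add: field_simps)
  have e: "(\<beta> * x^2 * G + q) / x = \<beta> * x * G + q / x" using x by (simp add: field_simps power2_eq_square)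
  have "\<beta> * x * G \<le> (\<beta> * x^2 * G + q) / x" unfolding e using q x by simp
  have "c * (\<beta> * x * G) \<le> sqrt (1 - q^2) * ((\<beta> * x^2 * G + q) / x)"
    using sc \<open>\<beta> * x * G \<le> _\<close> cp \<beta> x G q1 unfolding G_def by (intro mult_mono) auto
  then have "1 < sqrt (1 - q^2) * ((\<beta> * x^2 * G + q) / x)"
    using \<open>2 \<le> \<beta> * c * (x * G)\<close> by (simp add: algebra_simps)
  then have A: "0 < -1 + sqrt (1 - q^2) * (\<beta> * x^2 * G + q) / x" by simp
  have B: "0 < 3/2 * (1 - q^2) / x" using q1 x by simp
  show ?thesis using mult_pos_pos[OF B A] by (simp only: toy_rhs_def G_def)
qed

lemma stepC:
  assumes sol: "toy_solution g \<beta> \<rho> r \<infinity>" and good: "\<forall>s>0. deriv \<rho> s < 0 \<and> \<rho> s > 0"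
    and cG: "condG g" and \<beta>: "\<beta> > 0"
  shows "(\<rho> \<longlongrightarrow> 0) at_top \<and> (\<exists>rinf>0. (r \<longlongrightarrow> rinf) at_top)"
proof -
  define Fh where "Fh s = toy_rhs g \<beta> (\<rho> s) (r s)" for s
  have sD: "\<And>s. s > 0 \<Longrightarrow> -1 < \<rho> s \<and> \<rho> s < 1 \<and> 0 < r s \<and>
        (\<rho> has_real_derivative Fh s) (at s) \<and> (r has_real_derivative \<rho> s) (at s)"
    using sol unfolding toy_solution_def Fh_def sdom_def by auto
  have dF: "deriv \<rho> s = Fh s" if "s > 0" for s using sD[OF that] DERIV_imp_deriv by blast
  have rinc: "r u \<le> r v" if "0 < u" "u \<le> v" for u v
  proof (rule DERIV_nonneg_imp_nondecreasing[OF that(2)])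
    fix x assume "u \<le> x" "x \<le> v"
    then have "x > 0" using that by simp
    then have "(r has_real_derivative \<rho> x) (at x)" "0 \<le> \<rho> x" using sD good less_imp_le by blast+
    then show "\<exists>y. (r has_real_derivative y) (at x) \<and> 0 \<le> y" by blast
  qed
  have \<rho>dec: "\<rho> v \<le> \<rho> u" if "0 < u" "u \<le> v" for u v
  proof (rule DERIV_nonpos_imp_nonincreasing[OF that(2)])
    fix x assume "u \<le> x" "x \<le> v"
    then have "x > 0" using that by simp
    then have "(\<rho> has_real_derivative Fh x) (at x)" "Fh x \<le> 0" using sD good dF less_imp_le by metis+
    then show "\<exists>y. (\<rho> has_real_derivative y) (at x) \<and> y \<le> 0" by blast
  qed
  define a1 where "a1 = \<rho> 1"
  have a1: "0 < a1" "a1 < 1" using sD[of 1] good by (auto simp: a1_def)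
  have r1: "r 1 > 0" using sD[of 1] by simp
  have gpos: "\<And>v. v > 0 \<Longrightarrow> g v > 0" and glim: "filterlim (\<lambda>v. v * g (v^2)) at_top at_top"
    using cG by (auto simp: condG_def)
  obtain B where B: "B > 0" "\<And>s. s > 0 \<Longrightarrow> r s \<le> B"
  proof (rule ccontr)
    assume nb: "\<not> thesis"
    have unb: "\<exists>s>0. r s > Z" for Z
    proof (rule ccontr)
      assume "\<not> (\<exists>s>0. r s > Z)"
      then have "\<forall>s>0. r s \<le> max Z 1" by auto
      then show False using nb that[of "max Z 1"] by auto
    qed
    have rtop: "filterlim r at_top at_top"
      unfolding filterlim_at_top
    proof
      fix Z
      obtain s where s: "s > 0" "r s > Z" using unb by blast
      show "eventually (\<lambda>x. Z \<le> r x) at_top"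
        unfolding eventually_at_top_linorder using s rinc by (intro exI[of _ s]) force
    qed
    have "filterlim (\<lambda>s. r s * g ((r s)^2)) at_top at_top"
      using filterlim_compose[OF glim rtop] by (simp add: o_def)
    then have "eventually (\<lambda>s. 2 / (\<beta> * sqrt (1 - a1^2)) \<le> r s * g ((r s)^2)) at_top"
      unfolding filterlim_at_top by blast
    then obtain N where N: "\<And>s. s \<ge> N \<Longrightarrow> 2 / (\<beta> * sqrt (1 - a1^2)) \<le> r s * g ((r s)^2)"
      unfolding eventually_at_top_linorder by blast
    define s where "s = max N 1"
    have s: "s \<ge> 1" "s \<ge> N" by (auto simp: s_def)
    have "toy_rhs g \<beta> (\<rho> s) (r s) > 0"
    proof (rule rhs_pos[where q="\<rho> s" and x="r s" and g=g and aa=a1, OF _ _ a1(2) _ _ \<beta> N[OF s(2)]])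
      show "0 < \<rho> s" using good s by simp
      show "\<rho> s \<le> a1" unfolding a1_def using \<rho>dec[of 1 s] s by simp
      show "0 < r s" using sD[of s] s by simp
      then show "0 < g ((r s)^2)" by (intro gpos) simp
    qed
    moreover have "deriv \<rho> s < 0" using good s by simp
    ultimately show False using dF[of s] s by (simp add: Fh_def)
  qed
  define rinf where "rinf = Sup (r ` {0<..})"
  have bdd: "bdd_above (r ` {0<..})" using B by (auto intro!: bdd_aboveI[of _ B])
  have rle: "r s \<le> rinf" if "s > 0" for s unfolding rinf_def using that bdd by (intro cSup_upper) auto
  have rinfp: "rinf > 0" using rle[of 1] r1 by simp
  have rlim: "(r \<longlongrightarrow> rinf) at_top"
  proof (rule order_tendstoI)
    fix a assume "a < rinf"
    then obtain s where s: "s > 0" "a < r s" unfolding rinf_def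
      by (subst (asm) less_cSup_iff) (use bdd in auto)
    show "eventually (\<lambda>x. a < r x) at_top"
      unfolding eventually_at_top_linorder
    proof (intro exI[of _ s] allI impI)
      fix x assume sx: "s \<le> x" show "a < r x" using rinc[OF s(1) sx] s(2) by linarith
    qed
  next
    fix a assume "rinf < a"
    show "eventually (\<lambda>x. r x < a) at_top"
      unfolding eventually_at_top_linorder
    proof (intro exI[of _ 1] allI impI)
      fix x :: real assume x1: "1 \<le> x"
      have "r x \<le> rinf" by (rule rle) (use x1 in simp)
      then show "r x < a" using \<open>rinf < a\<close> by linarith
    qed
  qed
  have \<rho>lim: "(\<rho> \<longlongrightarrow> 0) at_top"
  proof (rule order_tendstoI)
    fix a :: real assume "a < 0"
    show "eventually (\<lambda>x. a < \<rho> x) at_top"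
      unfolding eventually_at_top_linorder
    proof (intro exI[of _ 1] allI impI)
      fix x :: real assume x1: "1 \<le> x"
      have "\<rho> x > 0" using good x1 by simp
      then show "a < \<rho> x" using \<open>a < 0\<close> by linarith
    qed
  next
    fix a :: real assume a: "0 < a"
    have "\<rho> s < a" if s: "s > 1 + B / a" for s
    proof (rule ccontr)
      assume "\<not> \<rho> s < a"
      then have ge: "a \<le> \<rho> s" by simp
      have s1: "1 \<le> s" using s B a by (smt (verit) divide_pos_pos)
      have "r 1 - a * 1 \<le> r s - a * s"
      proof (rule DERIV_nonneg_imp_nondecreasing[OF s1])
        fix x assume x: "1 \<le> x" "x \<le> s"
        have "((\<lambda>u. r u - a * u) has_real_derivative \<rho> x - a) (at x)"
          using sD[of x] x by (auto intro!: derivative_eq_intros)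
        moreover have "\<rho> x - a \<ge> 0" using \<rho>dec[of x s] x ge by simp
        ultimately show "\<exists>y. ((\<lambda>u. r u - a * u) has_real_derivative y) (at x) \<and> 0 \<le> y" by blast
      qed
      then have "a * (s - 1) \<le> r s - r 1" by (simp add: algebra_simps)
      also have "\<dots> < B" using B(2)[of s] r1 s1 by simp
      finally have "s - 1 < B / a" using a by (simp add: field_simps)
      then show False using s by simp
    qed
    then show "eventually (\<lambda>x. \<rho> x < a) at_top"
      unfolding eventually_at_top_linorder by (intro exI[of _ "2 + B / a"]) auto
  qed
  show ?thesis using \<rho>lim rlim rinfp by blast
qed



lemma vd_fst: "(y has_vector_derivative v) F \<Longrightarrow> ((\<lambda>t. fst (y t)) has_real_derivative fst v) F"
proof -
  assume "(y has_vector_derivative v) F"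
  then have "((\<lambda>t. fst (y t)) has_derivative (\<lambda>x. fst (x *\<^sub>R v))) F"
    unfolding has_vector_derivative_def by (rule has_derivative_fst)
  moreover have "(\<lambda>x. fst (x *\<^sub>R v)) = (*) (fst v)" by (auto simp: fun_eq_iff)
  ultimately show ?thesis unfolding has_field_derivative_def by simp
qed

lemma vd_snd: "(y has_vector_derivative v) F \<Longrightarrow> ((\<lambda>t. snd (y t)) has_real_derivative snd v) F"
proof -
  assume "(y has_vector_derivative v) F"
  then have "((\<lambda>t. snd (y t)) has_derivative (\<lambda>x. snd (x *\<^sub>R v))) F"
    unfolding has_vector_derivative_def by (rule has_derivative_snd)
  moreover have "(\<lambda>x. snd (x *\<^sub>R v)) = (*) (snd v)" by (auto simp: fun_eq_iff)
  ultimately show ?thesis unfolding has_field_derivative_def by simp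
qed

lemma cont_glue_left:
  fixes q f :: "real \<Rightarrow> real"
  assumes tT: "0 < t1" "t1 < T" and cq: "\<And>s. s \<in> {0<..<T} \<Longrightarrow> isCont q s"
    and lim: "(q \<longlongrightarrow> f T) (at_left T)" and eq: "\<And>s. s < T \<Longrightarrow> f s = q s"
  shows "continuous_on {t1..T} f"
  unfolding continuous_on_eq_continuous_within
proof
  fix x assume x: "x \<in> {t1..T}"
  show "continuous (at x within {t1..T}) f"
  proof (cases "x < T")
    case True
    have ev: "eventually (\<lambda>s. s \<in> {0<..<T}) (nhds x)"
      by (rule eventually_nhds_in_open) (use True x tT in auto)
    have "isCont q x" using cq True x tT by simp
    moreover have "eventually (\<lambda>s. q s = f s) (nhds x)" using ev by eventually_elim (simp add: eq)
    ultimately have "isCont f x" using isCont_cong by blast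
    then show ?thesis by (rule continuous_at_imp_continuous_within)
  next
    case False
    then have xT: "x = T" using x by simp
    have "eventually (\<lambda>s. q s = f s) (at_left T)"
      using eventually_at_left_real[OF tT(2)] by eventually_elim (simp add: eq)
    then have "(f \<longlongrightarrow> f T) (at_left T)" using lim by (rule tendsto_cong[THEN iffD1])
    then show ?thesis unfolding xT continuous_within using at_within_Icc_at_left[OF tT(2)] by simp
  qed
qed

lemma stepB:
  assumes ga: "real_analytic_on UNIV g"
    and sol: "toy_solution g \<beta> \<rho> r smax"
    and good: "\<forall>s\<in>sdom smax. deriv \<rho> s < 0 \<and> \<rho> s > 0"
    and maxc: "\<forall>\<rho>2 r2 smax2. toy_solution g \<beta> \<rho>2 r2 smax2 \<and> smax \<le> smax2 \<and>
        (\<forall>s\<in>sdom smax. \<rho>2 s = \<rho> s \<and> r2 s = r s) \<longrightarrow> smax2 = smax"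
  shows "smax = \<infinity>"
proof (rule ccontr)
  assume ni: "smax \<noteq> \<infinity>"
  have sp: "0 < smax" using sol by (simp add: toy_solution_def)
  obtain T where T: "smax = ereal T" "0 < T" using ni sp by (cases smax) auto
  define Fh where "Fh s = toy_rhs g \<beta> (\<rho> s) (r s)" for s
  have gder: "\<And>x. (g has_real_derivative deriv g x) (at x)" using analytic_deriv[OF ga] by blast
  have gc: "\<And>x. isCont g x" using gder by (rule DERIV_isCont)
  have gcon: "continuous_on UNIV g" using gc by (simp add: continuous_at_imp_continuous_on)
  have sD: "\<And>s. s \<in> {0<..<T} \<Longrightarrow> -1 < \<rho> s \<and> \<rho> s < 1 \<and> 0 < r s \<and>
        (\<rho> has_real_derivative Fh s) (at s) \<and> (r has_real_derivative \<rho> s) (at s)"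
    using sol unfolding toy_solution_def Fh_def T sdom_ereal by blast
  have goodT: "\<And>s. s \<in> {0<..<T} \<Longrightarrow> deriv \<rho> s < 0 \<and> \<rho> s > 0" using good T sdom_ereal by blast
  have dF: "deriv \<rho> s = Fh s" if "s \<in> {0<..<T}" for s using sD[OF that] DERIV_imp_deriv by blast
  have rinc: "r u \<le> r v" if "0 < u" "u \<le> v" "v < T" for u v
  proof (rule DERIV_nonneg_imp_nondecreasing[OF that(2)])
    fix x assume "u \<le> x" "x \<le> v"
    then have x: "x \<in> {0<..<T}" using that by simp
    then have "(r has_real_derivative \<rho> x) (at x)" "0 \<le> \<rho> x" using sD goodT less_imp_le by blast+
    then show "\<exists>y. (r has_real_derivative y) (at x) \<and> 0 \<le> y" by blast
  qed
  have \<rho>dec: "\<rho> v \<le> \<rho> u" if "0 < u" "u \<le> v" "v < T" for u v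
  proof (rule DERIV_nonpos_imp_nonincreasing[OF that(2)])
    fix x assume "u \<le> x" "x \<le> v"
    then have x: "x \<in> {0<..<T}" using that by simp
    then have "(\<rho> has_real_derivative Fh x) (at x)" "Fh x \<le> 0" using sD goodT dF less_imp_le by metis+
    then show "\<exists>y. (\<rho> has_real_derivative y) (at x) \<and> y \<le> 0" by blast
  qed
  have rlip: "r v - v \<le> r u - u" if "0 < u" "u \<le> v" "v < T" for u v
  proof (rule DERIV_nonpos_imp_nonincreasing[OF that(2), where f="\<lambda>s. r s - s"])
    fix x assume "u \<le> x" "x \<le> v"
    then have x: "x \<in> {0<..<T}" using that by simp
    then have "((\<lambda>s. r s - s) has_real_derivative \<rho> x - 1) (at x)" "\<rho> x - 1 \<le> 0"
      using sD[OF x] by (auto intro!: derivative_eq_intros)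
    then show "\<exists>y. ((\<lambda>s. r s - s) has_real_derivative y) (at x) \<and> y \<le> 0" by blast
  qed
  define t1 where "t1 = T / 2"
  have t1: "0 < t1" "t1 < T" "t1 \<in> {0<..<T}" using T by (auto simp: t1_def)
  define a1 where "a1 = \<rho> t1"
  define b1 where "b1 = r t1"
  have a1: "0 < a1" "a1 < 1" using sD[OF t1(3)] goodT[OF t1(3)] by (auto simp: a1_def)
  have b1: "0 < b1" using sD[OF t1(3)] by (auto simp: b1_def)
  have bnds: "0 < \<rho> s \<and> \<rho> s \<le> a1 \<and> b1 \<le> r s \<and> r s \<le> b1 + T" if s: "t1 \<le> s" "s < T" for s
  proof -
    have sI: "s \<in> {0<..<T}" using s t1 by simp
    have "r s - s \<le> r t1 - t1" using rlip[OF t1(1) s] .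
    then have "r s \<le> b1 + T" using s t1 unfolding b1_def by simp
    moreover have "b1 \<le> r s" unfolding b1_def using rinc[OF t1(1) s] .
    moreover have "\<rho> s \<le> a1" unfolding a1_def using \<rho>dec[OF t1(1) s] .
    moreover have "0 < \<rho> s" using goodT[OF sI] by simp
    ultimately show ?thesis by simp
  qed
  have atl: "at T within ({..<T} \<inter> {0<..<T}) = at_left T"
    by (rule at_within_nhd[of _ "{0<..}"]) (use T in auto)
  have "(r \<longlongrightarrow> Sup (r ` ({..<T} \<inter> {0<..<T}))) (at T within ({..<T} \<inter> {0<..<T}))"
  proof (rule Lim_left_bound)
    fix a b assume "a \<in> {0<..<T}" "b \<in> {0<..<T}" "b < T" "a \<le> b"
    then show "r a \<le> r b" using rinc by simp
  next
    fix b assume b: "b \<in> {0<..<T}" "b < T"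
    show "r b \<le> b1 + T"
    proof (cases "t1 \<le> b")
      case True then show ?thesis using bnds b by simp
    next
      case False then have "r b \<le> b1" unfolding b1_def using rinc[of b t1] b t1 by simp
      then show ?thesis using T by simp
    qed
  qed
  then obtain rL where rL: "(r \<longlongrightarrow> rL) (at_left T)" unfolding atl by blast
  have "((\<lambda>s. - \<rho> s) \<longlongrightarrow> Sup ((\<lambda>s. - \<rho> s) ` ({..<T} \<inter> {0<..<T}))) (at T within ({..<T} \<inter> {0<..<T}))"
  proof (rule Lim_left_bound)
    fix a b assume "a \<in> {0<..<T}" "b \<in> {0<..<T}" "b < T" "a \<le> b"
    then show "- \<rho> a \<le> - \<rho> b" using \<rho>dec by simp
  next
    fix b assume b: "b \<in> {0<..<T}" "b < T"
    show "- \<rho> b \<le> 0" using goodT[OF b(1)] by simp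
  qed
  then obtain S where "((\<lambda>s. - \<rho> s) \<longlongrightarrow> S) (at_left T)" unfolding atl by blast
  then have "((\<lambda>s. - (- \<rho> s)) \<longlongrightarrow> - S) (at_left T)" by (rule tendsto_minus)
  then obtain \<rho>L where \<rho>L: "(\<rho> \<longlongrightarrow> \<rho>L) (at_left T)" by auto
  have evt: "eventually (\<lambda>s. s \<in> {t1<..<T}) (at_left T)" by (rule eventually_at_left_real[OF t1(2)])
  have nb: "at_left T \<noteq> (bot :: real filter)" by simp
  have ev1: "eventually (\<lambda>s. 0 \<le> \<rho> s \<and> \<rho> s \<le> a1 \<and> b1 \<le> r s \<and> r s \<le> b1 + T) (at_left T)"
    using evt
  proof eventually_elim
    case (elim s)
    then have "t1 \<le> s" "s < T" by auto
    then show ?case using bnds[of s] by auto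
  qed
  have \<rho>L0: "0 \<le> \<rho>L"
    by (rule tendsto_lowerbound[OF \<rho>L _ nb]) (rule eventually_mono[OF ev1], simp)
  have \<rho>La: "\<rho>L \<le> a1"
    by (rule tendsto_upperbound[OF \<rho>L _ nb]) (rule eventually_mono[OF ev1], simp)
  have rLb: "b1 \<le> rL"
    by (rule tendsto_lowerbound[OF rL _ nb]) (rule eventually_mono[OF ev1], simp)
  have rLT: "rL \<le> b1 + T"
    by (rule tendsto_upperbound[OF rL _ nb]) (rule eventually_mono[OF ev1], simp)
  define c1 where "c1 = (1 + a1) / 2"
  define m where "m = b1 / 2"
  define Mx where "Mx = 2 * b1 + T"
  define Q where "Q = {-c1..c1} \<times> {m..Mx}"
  define R where "R = min ((1 - a1) / 2) (b1 / 2)"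
  define p0 where "p0 = (\<rho>L, rL)"
  have c1: "0 \<le> c1" "c1 < 1" using a1 by (auto simp: c1_def)
  have mp: "0 < m" using b1 by (simp add: m_def)
  have Rp: "0 < R" using a1 b1 by (simp add: R_def)
  have ballQ: "x \<in> Q" if x: "x \<in> cball p0 R" for x
  proof -
    have d: "dist p0 x \<le> R" using x by simp
    have "dist \<rho>L (fst x) \<le> R" using dist_fst_le[of p0 x] d by (simp add: p0_def)
    then have f: "\<bar>fst x - \<rho>L\<bar> \<le> R" by (simp add: dist_real_def abs_minus_commute)
    have "dist rL (snd x) \<le> R" using dist_snd_le[of p0 x] d by (simp add: p0_def)
    then have s: "\<bar>snd x - rL\<bar> \<le> R" by (simp add: dist_real_def abs_minus_commute)
    have R1: "2 * R \<le> 1 - a1" "2 * R \<le> b1" unfolding R_def by (auto simp: min_def)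
    have cm: "2 * c1 = 1 + a1" "2 * m = b1" "Mx = 2 * b1 + T" by (simp_all add: c1_def m_def Mx_def)
    have "-c1 \<le> fst x" "fst x \<le> c1" "m \<le> snd x" "snd x \<le> Mx"
    proof -
      have f1: "fst x - \<rho>L \<le> R" "\<rho>L - fst x \<le> R" using f by (simp_all add: abs_le_iff)
      have s1: "snd x - rL \<le> R" "rL - snd x \<le> R" using s by (simp_all add: abs_le_iff)
      show "-c1 \<le> fst x" using f1 R1 \<rho>L0 a1 cm by linarith
      show "fst x \<le> c1" using f1 R1 \<rho>La a1 cm by linarith
      show "m \<le> snd x" using s1 R1 rLb cm by linarith
      show "snd x \<le> Mx" using s1 R1 rLT b1 cm by linarith
    qed
    then show ?thesis unfolding Q_def by (simp add: mem_Times_iff)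
  qed
  define Fp where "Fp x = (toy_rhs g \<beta> (fst x) (snd x), fst x)" for x :: "real \<times> real"
  obtain L M where LM: "L \<ge> 0" "M \<ge> 0" "\<forall>x\<in>Q. norm (Fp x) \<le> M"
    "\<forall>x\<in>Q. \<forall>y\<in>Q. norm (Fp x - Fp y) \<le> L * norm (x - y)"
    using F_pair_lip[OF ga c1 mp, of Mx \<beta>] unfolding Q_def[symmetric] Fp_def by blast
  define h where "h = min (R / (M + 1)) (1 / (2 * (L + 1)))"
  have hp: "0 < h" using Rp LM by (simp add: h_def)
  have hM: "h * M \<le> R"
  proof -
    have "h \<le> R / (M + 1)" by (simp add: h_def)
    then have "h * (M + 1) \<le> R" using LM by (simp add: field_simps)
    then show ?thesis using hp by (simp add: algebra_simps)
  qed
  have hL: "h * L < 1"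
  proof -
    have "h \<le> 1 / (2 * (L + 1))" by (simp add: h_def)
    then have "h * (2 * (L + 1)) \<le> 1" using LM by (simp add: field_simps)
    then show ?thesis using hp by (simp add: algebra_simps)
  qed
  obtain y where y0: "y T = p0" and yP: "\<And>t. t \<in> {T..T+h} \<Longrightarrow> y t \<in> cball p0 R \<and>
      (y has_vector_derivative Fp (y t)) (at t within {T..T+h})"
    using picard[OF Rp hp LM(1) LM(2), of p0 Fp T] LM ballQ hM hL by blast
  have yQ: "\<bar>fst (y t)\<bar> \<le> c1 \<and> m \<le> snd (y t) \<and> snd (y t) \<le> Mx" if "t \<in> {T..T+h}" for t
    using ballQ[of "y t"] yP[OF that] by (cases "y t") (auto simp: Q_def abs_le_iff)
  define \<rho>2 where "\<rho>2 s = (if s < T then \<rho> s else fst (y s))" for s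
  define r2 where "r2 s = (if s < T then r s else snd (y s))" for s
  define G where "G s = toy_rhs g \<beta> (\<rho>2 s) (r2 s)" for s
  have D1: "(\<rho>2 has_real_derivative G s) (at s) \<and> (r2 has_real_derivative \<rho>2 s) (at s)"
    if s: "s \<in> {0<..<T}" for s
  proof -
    have eq1: "\<And>x. x \<in> {0<..<T} \<Longrightarrow> \<rho> x = \<rho>2 x" and eq2: "\<And>x. x \<in> {0<..<T} \<Longrightarrow> r x = r2 x"
      by (auto simp: \<rho>2_def r2_def)
    have "G s = Fh s" using s by (simp add: G_def Fh_def \<rho>2_def r2_def)
    moreover have "\<rho>2 s = \<rho> s" using s by (simp add: \<rho>2_def)
    ultimately show ?thesis
      using has_field_derivative_transform_within_open[OF conjunct1[OF conjunct2[OF conjunct2[OF conjunct2[OF sD[OF s]]]]] _ s eq1]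
        has_field_derivative_transform_within_open[OF conjunct2[OF conjunct2[OF conjunct2[OF conjunct2[OF sD[OF s]]]]] _ s eq2]
      by auto
  qed
  have D2: "(\<rho>2 has_real_derivative G s) (at s) \<and> (r2 has_real_derivative \<rho>2 s) (at s)"
    if s: "s \<in> {T<..<T+h}" for s
  proof -
    have sI: "s \<in> {T..T+h}" using s by simp
    have at: "at s within {T..T+h} = at s" using s by (intro at_within_Icc_at) auto
    have yd: "(y has_vector_derivative Fp (y s)) (at s)" using yP[OF sI] unfolding at by simp
    have eq1: "\<And>x. x \<in> {T<..<T+h} \<Longrightarrow> fst (y x) = \<rho>2 x" and eq2: "\<And>x. x \<in> {T<..<T+h} \<Longrightarrow> snd (y x) = r2 x"
      by (auto simp: \<rho>2_def r2_def)
    have "G s = fst (Fp (y s))" using s by (simp add: G_def Fp_def \<rho>2_def r2_def)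
    moreover have "\<rho>2 s = snd (Fp (y s))" using s by (simp add: Fp_def \<rho>2_def)
    ultimately show ?thesis
      using has_field_derivative_transform_within_open[OF vd_fst[OF yd] _ s eq1]
        has_field_derivative_transform_within_open[OF vd_snd[OF yd] _ s eq2]
      by auto
  qed
  have TI: "T \<in> {T..T+h}" using hp by simp
  have ydT: "(y has_vector_derivative Fp (y T)) (at T within {T..T+h})" using yP[OF TI] by simp
  have eqR1: "\<And>x. x \<in> {T..T+h} \<Longrightarrow> \<rho>2 x = fst (y x)" and eqR2: "\<And>x. x \<in> {T..T+h} \<Longrightarrow> r2 x = snd (y x)"
    by (auto simp: \<rho>2_def r2_def)
  have R1: "(\<rho>2 has_real_derivative G T) (at T within {T..T+h})"
  proof -
    have dd: "((\<lambda>t. fst (y t)) has_vector_derivative fst (Fp (y T))) (at T within {T..T+h})"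
      using vd_fst[OF ydT] unfolding has_real_derivative_iff_has_vector_derivative .
    have "(\<rho>2 has_vector_derivative fst (Fp (y T))) (at T within {T..T+h})"
      by (rule has_vector_derivative_transform[OF TI eqR1 dd])
    moreover have "G T = fst (Fp (y T))" by (simp add: G_def Fp_def \<rho>2_def r2_def)
    ultimately show ?thesis unfolding has_real_derivative_iff_has_vector_derivative by simp
  qed
  have R2: "(r2 has_real_derivative \<rho>2 T) (at T within {T..T+h})"
  proof -
    have dd: "((\<lambda>t. snd (y t)) has_vector_derivative snd (Fp (y T))) (at T within {T..T+h})"
      using vd_snd[OF ydT] unfolding has_real_derivative_iff_has_vector_derivative .
    have "(r2 has_vector_derivative snd (Fp (y T))) (at T within {T..T+h})"
      by (rule has_vector_derivative_transform[OF TI eqR2 dd])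
    moreover have "\<rho>2 T = snd (Fp (y T))" by (simp add: Fp_def \<rho>2_def)
    ultimately show ?thesis unfolding has_real_derivative_iff_has_vector_derivative by simp
  qed
  have \<rho>2T: "\<rho>2 T = \<rho>L" and r2T: "r2 T = rL" using y0 by (simp_all add: \<rho>2_def r2_def p0_def)
  have c\<rho>2: "continuous_on {t1..T} \<rho>2"
    by (rule cont_glue_left[OF t1(1,2), of \<rho>]) (use sD \<rho>L \<rho>2T in \<open>auto intro: DERIV_isCont simp: \<rho>2_def\<close>)
  have cr2: "continuous_on {t1..T} r2"
    by (rule cont_glue_left[OF t1(1,2), of r]) (use sD rL r2T in \<open>auto intro: DERIV_isCont simp: r2_def\<close>)
  have r2pos: "r2 u \<noteq> 0" if "u \<in> {t1..T}" for u
  proof (cases "u < T")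
    case True then show ?thesis using bnds[of u] that b1 by (simp add: r2_def)
  next
    case False then have "u = T" using that by simp
    then show ?thesis using r2T rLb b1 by simp
  qed
  have cG: "continuous_on {t1..T} G"
  proof -
    have "continuous_on {t1..T} (\<lambda>u. g (r2 u ^ 2))"
      by (rule continuous_on_compose2[OF gcon]) (use cr2 in \<open>auto intro!: continuous_intros\<close>)
    then show ?thesis unfolding G_def toy_rhs_def using c\<rho>2 cr2 r2pos
      by (intro continuous_intros) auto
  qed
  have DT1: "(\<rho>2 has_real_derivative G T) (at T)"
    by (rule glue_deriv[where a=t1 and b="T+h", OF t1(2) _ c\<rho>2 cG _ R1]) (use hp D1 t1 in auto)
  have DT2: "(r2 has_real_derivative \<rho>2 T) (at T)"
    by (rule glue_deriv[where a=t1 and b="T+h", OF t1(2) _ cr2 c\<rho>2 _ R2]) (use hp D1 t1 in auto)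
  have "toy_solution g \<beta> \<rho>2 r2 (ereal (T + h))"
    unfolding toy_solution_def sdom_ereal
  proof (rule conjI)
    show "0 < ereal (T + h)" using T hp by simp
  next
    show "\<forall>s\<in>{0<..<T+h}. -1 < \<rho>2 s \<and> \<rho>2 s < 1 \<and> 0 < r2 s \<and>
        (\<rho>2 has_real_derivative toy_rhs g \<beta> (\<rho>2 s) (r2 s)) (at s) \<and> (r2 has_real_derivative \<rho>2 s) (at s)"
  proof
    fix s assume s: "s \<in> {0<..<T+h}"
    consider "s < T" | "s = T" | "s > T" by linarith
    then show "-1 < \<rho>2 s \<and> \<rho>2 s < 1 \<and> 0 < r2 s \<and>
        (\<rho>2 has_real_derivative toy_rhs g \<beta> (\<rho>2 s) (r2 s)) (at s) \<and> (r2 has_real_derivative \<rho>2 s) (at s)"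
    proof cases
      case 1
      then have sI: "s \<in> {0<..<T}" using s by simp
      show ?thesis using sD[OF sI] D1[OF sI] 1 by (simp add: G_def \<rho>2_def r2_def)
    next
      case 2
      show ?thesis using DT1 DT2 \<rho>2T r2T \<rho>L0 \<rho>La a1 rLb b1 2 by (simp add: G_def)
    next
      case 3
      then have sI: "s \<in> {T<..<T+h}" using s by simp
      have "\<bar>fst (y s)\<bar> \<le> c1 \<and> m \<le> snd (y s)" using yQ[of s] sI by simp
      then have "-1 < \<rho>2 s \<and> \<rho>2 s < 1 \<and> 0 < r2 s" using 3 c1 mp by (auto simp: \<rho>2_def r2_def abs_le_iff)
      then show ?thesis using D2[OF sI] by (simp add: G_def)
    qed
  qed
  qed
  moreover have "smax \<le> ereal (T + h)" using T hp by simp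
  moreover have "\<forall>s\<in>sdom smax. \<rho>2 s = \<rho> s \<and> r2 s = r s" by (simp add: T sdom_ereal \<rho>2_def r2_def)
  ultimately have "ereal (T + h) = smax" using maxc by blast
  then show False using T hp by simp
qed


theorem lemma3p4:
  fixes g :: "real \<Rightarrow> real" and \<beta> :: real
    and \<rho> r :: "real \<Rightarrow> real" and smax :: ereal
  assumes "real_analytic_on UNIV g"
    and "condG g"
    and "X_toy g \<noteq> {}"
    and "\<beta> \<in> X_toy g"
    and "max_toy_tip_solution g \<beta> \<rho> r smax"
  shows "toy_steady_tip_growth g \<beta> \<rho> r smax"
proof -
  have tip: "toy_tip_solution g \<beta> \<rho> r smax"
    and maxc: "\<forall>\<rho>2 r2 smax2. toy_solution g \<beta> \<rho>2 r2 smax2 \<and> smax \<le> smax2 \<and>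
        (\<forall>s\<in>sdom smax. \<rho>2 s = \<rho> s \<and> r2 s = r s) \<longrightarrow> smax2 = smax"
    using assms(5) unfolding max_toy_tip_solution_def by blast+
  have sol: "toy_solution g \<beta> \<rho> r smax" and S1: "toy_S1 \<rho> r" and S2: "toy_S2 \<rho> r smax"
    and s0ex: "\<exists>s0>0. ereal s0 \<le> smax \<and> (\<forall>s\<in>{0<..<s0}. deriv \<rho> s < 0 \<and> \<rho> s > 0)"
    using tip unfolding toy_tip_solution_def by blast+
  obtain s0 where s0: "s0 > 0" "ereal s0 \<le> smax" "\<forall>s\<in>{0<..<s0}. deriv \<rho> s < 0 \<and> \<rho> s > 0"
    using s0ex by blast
  have \<beta>p: "\<beta> > 0" and nA: "\<beta> \<notin> A_toy g" and nB: "\<beta> \<notin> B_toy g"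
    using assms(4) unfolding X_toy_def by auto
  have notA: "\<not> (\<exists>s1\<in>sdom smax. (\<forall>s\<in>{0<..<s1}. \<rho> s * deriv \<rho> s < 0) \<and> \<rho> s1 = 0)"
    using nA \<beta>p assms(5) unfolding A_toy_def by blast
  have notB: "\<not> (\<exists>s1\<in>sdom smax. (\<forall>s\<in>{0<..<s1}. \<rho> s * deriv \<rho> s < 0) \<and> deriv \<rho> s1 = 0)"
    using nB \<beta>p assms(5) unfolding B_toy_def by blast
  have gc: "\<And>x. isCont g x" using analytic_deriv[OF assms(1)] DERIV_isCont by blast
  have good: "\<forall>s\<in>sdom smax. deriv \<rho> s < 0 \<and> \<rho> s > 0"
    by (rule stepA[OF sol gc s0(1) s0(2) s0(3) notA notB])
  have inf: "smax = \<infinity>" by (rule stepB[OF assms(1) sol good maxc])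
  have good': "\<forall>s>0. deriv \<rho> s < 0 \<and> \<rho> s > 0" using good unfolding inf sdom_inf by auto
  have sol': "toy_solution g \<beta> \<rho> r \<infinity>" using sol inf by simp
  have lims: "(\<rho> \<longlongrightarrow> 0) at_top \<and> (\<exists>rinf>0. (r \<longlongrightarrow> rinf) at_top)"
    by (rule stepC[OF sol' good' assms(2) \<beta>p])
  show ?thesis unfolding toy_steady_tip_growth_def using sol S1 S2 inf good' lims by blast
qed

end
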